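(* Let $a>2$ and $s\ge 1$ be integers and $A=(sa,\ sa+1,\ sa+a)$. Then $g(A)=as(a+s-2)-1$.
   Context: For a tuple $A$ of positive integers with $\gcd(A)=1$, the Frobenius number $g(A)$ is the largest nonnegative integer that cannot be written as a nonnegative integer combination of the entries of $A$. *)

theory Defs
  imports Main
begin

definition representable :: "nat list \<Rightarrow> nat \<Rightarrow> bool" where
  "representable A n \<longleftrightarrow>
     (\<exists>c :: nat list. length c = length A \<and> n = (\<Sum>i<length A. c ! i * A ! i))"

text \<open>Frobenius number: the largest nonnegative integer not representable
  (meaningful when gcd of the entries is 1, all entries positive, and some integer
  is not representable).\<close>
definition frobenius :: "nat list \<Rightarrow> nat" where
  "frobenius A = (GREATEST n. \<not> representable A n)"

end

theory Submission
  imports Defs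
begin

lemma rep3: "representable [p, q, r] n \<longleftrightarrow> (\<exists>x y z. n = x*p + y*q + z*r)"
proof
  assume "representable [p, q, r] n"
  then obtain c where c: "length c = length [p,q,r]" "n = (\<Sum>i<length [p,q,r]. c ! i * [p,q,r] ! i)"
    unfolding representable_def by blast
  then obtain x y z where "c = [x,y,z]" by (auto simp: length_Suc_conv)
  then show "\<exists>x y z. n = x*p + y*q + z*r" using c(2)
    by (simp add: eval_nat_numeral) blast
next
  assume "\<exists>x y z. n = x*p + y*q + z*r"
  then obtain x y z where "n = x*p + y*q + z*r" by blast
  then show "representable [p, q, r] n"
    unfolding representable_def
    by (rule_tac x="[x,y,z]" in exI) (simp add: eval_nat_numeral)
qed

lemma notrep:
  fixes a s :: nat
  assumes "a > 2" "s \<ge> 1"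
  shows "\<not> representable [s*a, s*a + 1, s*a + a] (s*a*(a+s-2) - 1)"
proof
  define m where "m = s*a"
  have mpos: "m \<ge> 1" using assms unfolding m_def by simp
  assume "representable [s*a, s*a + 1, s*a + a] (s*a*(a+s-2) - 1)"
  then obtain x y z where e: "m*(a+s-2) - 1 = x*m + y*(m+1) + z*(m+a)"
    unfolding rep3 m_def by (auto simp: mult.commute)
  define k where "k = x+y+z"
  have e2: "m*(a+s-2) - 1 = k*m + y + a*z" using e unfolding k_def by (simp add: algebra_simps)
  have pos: "m*(a+s-2) \<ge> 1" using mpos assms by simp
  show False
  proof (cases "k \<ge> a+s-2")
    case True
    then have "k*m \<ge> (a+s-2)*m" by simp
    then have "k*m \<ge> m*(a+s-2)" by (simp add: mult.commute)
    then show False using e2 pos by linarith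
  next
    case False
    define j where "j = a+s-2-k"
    have j1: "j \<ge> 1" and kj: "k + j = a+s-2" using False unfolding j_def by auto
    have "m*(a+s-2) = m*k + m*j" using kj by (metis add_mult_distrib2)
    then have e3: "y + a*z + 1 = j*s*a" using e2 pos unfolding m_def by (simp add: algebra_simps)
    then have "a dvd (y+1)"
      by (metis dvd_add_times_triv_right_iff dvd_triv_right add.commute add.left_commute mult.commute)
    then obtain w where w: "y + 1 = a*w" by blast
    have w1: "w \<ge> 1" using w by (cases w) auto
    have "a*(w + z) = a*(j*s)" using e3 w by (simp add: algebra_simps)
    then have wz: "w + z = j*s" using assms by simp
    have "(a-1)*w \<ge> (a-1)*1" using w1 by (rule mult_left_mono) simp
    then have "a*w \<ge> w + a - 1" using assms by (simp add: algebra_simps)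
    then have "y + z \<ge> j*s + a - 2" using w wz by linarith
    moreover have "y + z \<le> k" unfolding k_def by simp
    moreover have "j*s \<ge> s" using j1 by simp
    ultimately show False using kj j1 assms by linarith
  qed
qed

lemma rep:
  fixes a s n :: nat
  assumes "a > 2" "s \<ge> 1" "n \<ge> s*a*(a+s-2)"
  shows "representable [s*a, s*a + 1, s*a + a] n"
proof -
  define m where "m = s*a"
  have mpos: "m > 0" using assms unfolding m_def by simp
  define k where "k = n div m"
  define r where "r = n mod m"
  define q where "q = r div a"
  define t where "t = r mod a"
  have nk: "n = k*m + r" unfolding k_def r_def by simp
  have "r < m" unfolding r_def using mpos by simp
  then have "q < s" unfolding q_def m_def using assms
    by (simp add: less_mult_imp_div_less mult.commute)
  have "t < a" unfolding t_def using assms by simp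
  have r: "r = t + a*q" unfolding t_def q_def by simp
  have "k \<ge> a+s-2" unfolding k_def using assms(3) mpos unfolding m_def
    by (metis div_le_mono nonzero_mult_div_cancel_left m_def mpos[unfolded m_def] neq0_conv mult.commute) 
  then have kq: "k \<ge> q + t" using \<open>q < s\<close> \<open>t < a\<close> by linarith
  define x where "x = k - q - t"
  have "n = x*m + t*(m+1) + q*(m+a)"
  proof -
    have "x + q + t = k" unfolding x_def using kq by simp
    then have "k*m = x*m + q*m + t*m" by (metis add_mult_distrib)
    then show ?thesis using nk r by (simp add: algebra_simps)
  qed
  then show ?thesis unfolding rep3 m_def by blast
qed

theorem mainTheorem3:
  fixes a s :: nat
  assumes "a > 2" and "s \<ge> 1"
  shows "int (frobenius [s*a, s*a + 1, s*a + a]) = int a * int s * (int a + int s - 2) - 1"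
proof -
  have f: "frobenius [s*a, s*a + 1, s*a + a] = s*a*(a+s-2) - 1"
    unfolding frobenius_def
  proof (rule Greatest_equality)
    show "\<not> representable [s*a, s*a + 1, s*a + a] (s*a*(a+s-2) - 1)"
      using notrep assms by blast
  next
    fix y assume "\<not> representable [s*a, s*a + 1, s*a + a] y"
    then have "\<not> y \<ge> s*a*(a+s-2)" using rep assms by blast
    then show "y \<le> s*a*(a+s-2) - 1" by simp
  qed
  have pos: "s*a*(a+s-2) \<ge> 1" using assms by simp
  have "int (s*a*(a+s-2) - 1) = int s * int a * (int a + int s - 2) - 1"
    using pos assms by (simp add: of_nat_diff)
  then show ?thesis using f by (simp add: algebra_simps)
qed

end
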